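(* There exist a compact metric space $X$ and a flow $\phi$ on $X$ which has the shadowing property, is singular-expansive and singular-equicontinuous, but is not equicontinuous.
   Context: A flow is a continuous $\phi:\mathbb{R}\times X\to X$ with $\phi_0=\mathrm{id}$, $\phi_{t+s}=\phi_t\circ\phi_s$; $\phi_I(x)=\{\phi_t(x):t\in I\}$; $Sing(\phi)$ is the set of fixed points; $dist(z,A)=\inf_{a\in A}d(z,a)$ (with $dist(z,\emptyset)=diam(X)$). Singular-expansive: for every $\epsilon>0$ there is $\delta>0$ such that whenever $x,y\in X$ and an increasing homeomorphism $s:\mathbb{R}\to\mathbb{R}$ satisfy $d(\phi_t(x),\phi_{s(t)}(y))\le\delta\,dist(\phi_t(x),Sing(\phi))$ for all $t$, then $\phi_{s(t_0)}(y)\in\phi_{[t_0-\epsilon,t_0+\epsilon]}(x)$ for some $t_0$. Equicontinuous: for every $\epsilon>0$ there is $\delta>0$ such that $d(x,y)\le\delta$ implies $d(\phi_t(x),\phi_t(y))\le\epsilon$ for all $t\in\mathbb{R}$. Singular-equicontinuous: for every $\epsilon>0$ there is $\delta>0$ such that $d(x,y)\le\delta\,dist(x,Sing(\phi))$ implies $d(\phi_t(x),\phi_t(y))\le\epsilon$ for all $t\in\mathbb{R}$. Shadowing property: for $\delta,T>0$ a $(\delta,T)$-pseudo orbit is a sequence $(x_i,t_i)_{i\in\mathbb{Z}}$ with $x_i\in X$, $t_i\ge T$, $d(\phi_{t_i}(x_i),x_{i+1})\le\delta$. Let $Rep(\epsilon)$ be the set of increasing homeomorphisms $s:\mathbb{R}\to\mathbb{R}$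 with $|\frac{s(t)-s(r)}{t-r}-1|\le\epsilon$ for all $t\ne r$. Set $S(0)=0$, $S(i)=t_0+\dots+t_{i-1}$ for $i>0$, $S(i)=-t_{-1}-\dots-t_{i}$ for $i<0$. The pseudo orbit is $\epsilon$-shadowed if there are $x\in X$ and $s\in Rep(\epsilon)$ with $d(\phi_{s(t)}(x),\phi_{t-S(i)}(x_i))\le\epsilon$ for all $i\in\mathbb{Z}$ and $S(i)\le t<S(i+1)$. $\phi$ has the shadowing property if for every $\epsilon>0$ there is $\delta>0$ such that every $(\delta,1)$-pseudo orbit can be $\epsilon$-shadowed. *)

theory Defs
  imports "HOL-Analysis.Analysis"
begin

definition is_flow :: "'a set \<Rightarrow> ('a \<Rightarrow> 'a \<Rightarrow> real) \<Rightarrow> (real \<Rightarrow> 'a \<Rightarrow> 'a) \<Rightarrow> bool" where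
  "is_flow X d \<phi> \<longleftrightarrow>
     continuous_map (prod_topology euclideanreal (Metric_space.mtopology X d))
                    (Metric_space.mtopology X d) (\<lambda>(t, x). \<phi> t x) \<and>
     (\<forall>x\<in>X. \<phi> 0 x = x) \<and>
     (\<forall>x\<in>X. \<forall>t s. \<phi> (t + s) x = \<phi> t (\<phi> s x))"

definition Sing :: "'a set \<Rightarrow> (real \<Rightarrow> 'a \<Rightarrow> 'a) \<Rightarrow> 'a set" where
  "Sing X \<phi> = {x\<in>X. \<forall>t. \<phi> t x = x}"

definition diam_sp :: "'a set \<Rightarrow> ('a \<Rightarrow> 'a \<Rightarrow> real) \<Rightarrow> real" where
  "diam_sp X d = (SUP p\<in>X \<times> X. d (fst p) (snd p))"

definition dist_set :: "'a set \<Rightarrow> ('a \<Rightarrow> 'a \<Rightarrow> real) \<Rightarrow> 'a \<Rightarrow> 'a set \<Rightarrow> real" where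
  "dist_set X d z A = (if A = {} then diam_sp X d else (INF a\<in>A. d z a))"

definition orbit_seg :: "(real \<Rightarrow> 'a \<Rightarrow> 'a) \<Rightarrow> real set \<Rightarrow> 'a \<Rightarrow> 'a set" where
  "orbit_seg \<phi> I x = (\<lambda>t. \<phi> t x) ` I"

definition inc_homeo :: "(real \<Rightarrow> real) \<Rightarrow> bool" where
  "inc_homeo s \<longleftrightarrow> strict_mono s \<and> (\<exists>g. homeomorphism UNIV UNIV s g)"

definition singular_expansive :: "'a set \<Rightarrow> ('a \<Rightarrow> 'a \<Rightarrow> real) \<Rightarrow> (real \<Rightarrow> 'a \<Rightarrow> 'a) \<Rightarrow> bool" where
  "singular_expansive X d \<phi> \<longleftrightarrow>
     (\<forall>\<epsilon>>0. \<exists>\<delta>>0. \<forall>x\<in>X. \<forall>y\<in>X. \<forall>s. inc_homeo s \<and>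
        (\<forall>t. d (\<phi> t x) (\<phi> (s t) y) \<le> \<delta> * dist_set X d (\<phi> t x) (Sing X \<phi>))
        \<longrightarrow> (\<exists>t0. \<phi> (s t0) y \<in> orbit_seg \<phi> {t0 - \<epsilon> .. t0 + \<epsilon>} x))"

definition equicontinuous_flow :: "'a set \<Rightarrow> ('a \<Rightarrow> 'a \<Rightarrow> real) \<Rightarrow> (real \<Rightarrow> 'a \<Rightarrow> 'a) \<Rightarrow> bool" where
  "equicontinuous_flow X d \<phi> \<longleftrightarrow>
     (\<forall>\<epsilon>>0. \<exists>\<delta>>0. \<forall>x\<in>X. \<forall>y\<in>X. d x y \<le> \<delta> \<longrightarrow> (\<forall>t. d (\<phi> t x) (\<phi> t y) \<le> \<epsilon>))"

definition singular_equicontinuous :: "'a set \<Rightarrow> ('a \<Rightarrow> 'a \<Rightarrow> real) \<Rightarrow> (real \<Rightarrow> 'a \<Rightarrow> 'a) \<Rightarrow> bool" where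
  "singular_equicontinuous X d \<phi> \<longleftrightarrow>
     (\<forall>\<epsilon>>0. \<exists>\<delta>>0. \<forall>x\<in>X. \<forall>y\<in>X. d x y \<le> \<delta> * dist_set X d x (Sing X \<phi>) \<longrightarrow>
        (\<forall>t. d (\<phi> t x) (\<phi> t y) \<le> \<epsilon>))"

definition pseudo_orbit :: "'a set \<Rightarrow> ('a \<Rightarrow> 'a \<Rightarrow> real) \<Rightarrow> (real \<Rightarrow> 'a \<Rightarrow> 'a) \<Rightarrow> real \<Rightarrow> real
     \<Rightarrow> (int \<Rightarrow> 'a) \<Rightarrow> (int \<Rightarrow> real) \<Rightarrow> bool" where
  "pseudo_orbit X d \<phi> \<delta> T xs ts \<longleftrightarrow>
     (\<forall>i. xs i \<in> X \<and> ts i \<ge> T \<and> d (\<phi> (ts i) (xs i)) (xs (i + 1)) \<le> \<delta>)"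

definition Rep :: "real \<Rightarrow> (real \<Rightarrow> real) set" where
  "Rep \<epsilon> = {s. inc_homeo s \<and> (\<forall>t r. t \<noteq> r \<longrightarrow> \<bar>(s t - s r) / (t - r) - 1\<bar> \<le> \<epsilon>)}"

definition Ssum :: "(int \<Rightarrow> real) \<Rightarrow> int \<Rightarrow> real" where
  "Ssum ts i = (if i \<ge> 0 then (\<Sum>j\<in>{0..<i}. ts j) else - (\<Sum>j\<in>{i..<0}. ts j))"

definition shadowed :: "'a set \<Rightarrow> ('a \<Rightarrow> 'a \<Rightarrow> real) \<Rightarrow> (real \<Rightarrow> 'a \<Rightarrow> 'a) \<Rightarrow> real
     \<Rightarrow> (int \<Rightarrow> 'a) \<Rightarrow> (int \<Rightarrow> real) \<Rightarrow> bool" where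
  "shadowed X d \<phi> \<epsilon> xs ts \<longleftrightarrow>
     (\<exists>x\<in>X. \<exists>s\<in>Rep \<epsilon>. \<forall>i t. Ssum ts i \<le> t \<and> t < Ssum ts (i + 1) \<longrightarrow>
        d (\<phi> (s t) x) (\<phi> (t - Ssum ts i) (xs i)) \<le> \<epsilon>)"

definition shadowing_property :: "'a set \<Rightarrow> ('a \<Rightarrow> 'a \<Rightarrow> real) \<Rightarrow> (real \<Rightarrow> 'a \<Rightarrow> 'a) \<Rightarrow> bool" where
  "shadowing_property X d \<phi> \<longleftrightarrow>
     (\<forall>\<epsilon>>0. \<exists>\<delta>>0. \<forall>xs ts. pseudo_orbit X d \<phi> \<delta> 1 xs ts \<longrightarrow> shadowed X d \<phi> \<epsilon> xs ts)"

end

theory Submission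
  imports Defs
begin


lemma mtop: "Metric_space.mtopology {-1..1::real} dist = top_of_set {-1..1}"
proof -
  interpret Submetric UNIV dist "{-1..1::real}" by (simp add: Submetric_def Submetric_axioms_def Met_TC.Metric_space_axioms)
  show ?thesis using mtopology_submetric by simp
qed

lemma ms: "Metric_space {-1..1::real} dist"
  by (simp add: Met_TC.subspace)

lemma cpt: "compact_space (Metric_space.mtopology {-1..1::real} dist)"
  by (simp add: mtop compact_space_subtopology)

definition flw :: "real \<Rightarrow> real \<Rightarrow> real" where "flw t x = (x + tanh t)/(1 + x * tanh t)"

lemma den_pos: "\<bar>x\<bar> \<le> 1 \<Longrightarrow> 1 + x * tanh (t::real) > 0"
proof -
  assume "\<bar>x\<bar> \<le> 1"
  moreover have "\<bar>tanh t\<bar> < 1" using tanh_real_bounds[of t] by auto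
  moreover have "\<bar>tanh t\<bar> < 1" using tanh_real_bounds[of t] by auto
  ultimately have "\<bar>x\<bar> * \<bar>tanh t\<bar> \<le> \<bar>tanh t\<bar>" "\<bar>tanh t\<bar> < 1"
    using mult_right_mono[of "\<bar>x\<bar>" 1 "\<bar>tanh t\<bar>"] by auto
  hence "\<bar>x * tanh t\<bar> < 1" by (simp add: abs_mult)
  thus ?thesis by linarith
qed

lemma tanh_artanh_r: "\<bar>x::real\<bar> < 1 \<Longrightarrow> tanh (artanh x) = x"
proof -
  assume a: "\<bar>x\<bar> < 1"
  have p: "(1+x)/(1-x) > 0" using a by (auto simp: divide_pos_pos)
  have "exp (- 2 * artanh x) = inverse ((1+x)/(1-x))"
    unfolding artanh_def using p by (simp add: exp_minus exp_ln)
  also have "\<dots> = (1-x)/(1+x)" by simp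
  finally have e: "exp (- 2 * artanh x) = (1-x)/(1+x)" .
  have "1 + x > 0" "1 - x > 0" using a by auto
  then show ?thesis unfolding tanh_real_altdef e by (simp add: field_simps)
qed

lemma flw_int: "\<bar>x\<bar> < 1 \<Longrightarrow> flw t x = tanh (artanh x + t)"
proof -
  assume a: "\<bar>x\<bar> < 1"
  have "tanh (artanh x) = x" using a by (simp add: tanh_artanh_r)
  moreover have "cosh (artanh x) \<noteq> 0" "cosh t \<noteq> 0" by (auto simp: cosh_real_pos[THEN less_imp_neq, symmetric])
  ultimately show ?thesis unfolding flw_def by (simp add: tanh_add)
qed

lemma tanh_lip_aux: "a < (b::real) \<Longrightarrow> tanh b - tanh a \<le> b - a"
proof -
  assume ab: "a < b"
  have "\<And>x::real. DERIV tanh x :> 1 - tanh x ^ 2"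
  proof -
    fix x :: real
    have "DERIV (\<lambda>x. tanh x) x :> (1 - tanh x ^ 2) * 1"
      by (rule has_field_derivative_tanh) (auto intro: DERIV_ident)
    thus "DERIV tanh x :> 1 - tanh x ^ 2" by simp
  qed
  from MVT2[OF ab this] obtain z where z: "tanh b - tanh a = (b - a) * (1 - tanh z ^ 2)" by blast
  have "(b - a) * (1 - tanh z ^ 2) \<le> (b - a) * 1" using ab by (intro mult_left_mono) auto
  thus ?thesis using z by simp
qed

lemma tanh_lip: "\<bar>tanh a - tanh (b::real)\<bar> \<le> \<bar>a - b\<bar>"
proof -
  have "tanh a \<le> tanh b \<longleftrightarrow> a \<le> b" by simp
  then show ?thesis using tanh_lip_aux[of a b] tanh_lip_aux[of b a]
    by (cases a b rule: linorder_cases) auto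
qed

lemma artanh_lip_aux: "a < (b::real) \<Longrightarrow> \<bar>a\<bar> \<le> r \<Longrightarrow> \<bar>b\<bar> \<le> r \<Longrightarrow> r < 1 \<Longrightarrow>
   0 \<le> artanh b - artanh a \<and> artanh b - artanh a \<le> (b - a) / (1 - r^2)"
proof -
  assume ab: "a < b" and r: "\<bar>a\<bar> \<le> r" "\<bar>b\<bar> \<le> r" "r < 1"
  have "\<And>x. a \<le> x \<Longrightarrow> x \<le> b \<Longrightarrow> DERIV artanh x :> 1 / (1 - x ^ 2)"
    using r by (intro artanh_real_has_field_derivative) auto
  from MVT2[OF ab this] obtain z where z: "a < z" "z < b" "artanh b - artanh a = (b - a) * (1 / (1 - z ^ 2))" by blast
  have zr: "\<bar>z\<bar> \<le> r" using z r by auto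
  have "z^2 \<le> r^2" using zr by (metis abs_le_square_iff abs_of_nonneg abs_ge_zero order_trans power2_abs)
  hence "1 - r^2 \<le> 1 - z^2" by simp
  moreover have "0 < 1 - r^2"
  proof -
    have "\<bar>r\<bar> < 1" using r by auto
    hence "r^2 < 1" by (simp add: abs_square_less_1)
    thus ?thesis by simp
  qed
  ultimately have "1 / (1 - z ^ 2) \<le> 1 / (1 - r^2)" "0 < 1 / (1 - z^2)" by (auto intro: divide_left_mono)
  hence "(b - a) * (1 / (1 - z ^ 2)) \<le> (b - a) * (1 / (1 - r^2))" "0 \<le> (b - a) * (1 / (1 - z ^ 2))"
    using ab by (intro mult_left_mono mult_nonneg_nonneg; simp)+
  thus ?thesis using z by simp
qed

lemma artanh_lip: "\<bar>a\<bar> \<le> r \<Longrightarrow> \<bar>b\<bar> \<le> r \<Longrightarrow> r < (1::real) \<Longrightarrow>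
   \<bar>artanh a - artanh b\<bar> \<le> \<bar>a - b\<bar> / (1 - r^2)"
  using artanh_lip_aux[of a b r] artanh_lip_aux[of b a r]
  by (cases a b rule: linorder_cases) (auto simp: abs_if)

lemma tanh_abs_lt: "\<bar>tanh (t::real)\<bar> < 1" using tanh_real_bounds[of t] by auto

lemma flw_diff: "\<bar>x\<bar> \<le> 1 \<Longrightarrow> \<bar>y\<bar> \<le> 1 \<Longrightarrow>
  flw t x - flw t y = (x - y) * (1 - tanh t ^ 2) / ((1 + x * tanh t) * (1 + y * tanh t))"
  using den_pos[of x t] den_pos[of y t] unfolding flw_def
  by (simp add: field_simps power2_eq_square)

lemma flw_mono: "\<bar>x\<bar> \<le> 1 \<Longrightarrow> \<bar>y\<bar> \<le> 1 \<Longrightarrow> x \<le> y \<Longrightarrow> flw t x \<le> flw t y"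
proof -
  assume a: "\<bar>x\<bar> \<le> 1" "\<bar>y\<bar> \<le> 1" "x \<le> y"
  have "tanh t ^ 2 < 1" using tanh_abs_lt[of t] by (simp add: abs_square_less_1)
  hence "0 \<le> (y - x) * (1 - tanh t ^ 2) / ((1 + y * tanh t) * (1 + x * tanh t))"
    using a den_pos[of x t] den_pos[of y t] by (intro divide_nonneg_pos mult_nonneg_nonneg) auto
  thus ?thesis using flw_diff[of y x t] a by simp
qed

lemma flw_p1 [simp]: "flw t 1 = 1" using den_pos[of 1 t] unfolding flw_def by simp
lemma flw_m1 [simp]: "flw t (-1) = -1"
proof -
  have "1 - tanh t > 0" using tanh_abs_lt[of t] by auto
  thus ?thesis unfolding flw_def by (simp add: field_simps)
qed
lemma flw_0 [simp]: "flw 0 x = x" unfolding flw_def by simp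

lemma flw_bound': "-1 \<le> x \<Longrightarrow> x \<le> 1 \<Longrightarrow> -1 \<le> flw t x \<and> flw t x \<le> 1"
  using flw_mono[of "-1" x t] flw_mono[of x 1 t] by (auto simp: abs_le_iff)

lemma flw_bound: "\<bar>x\<bar> \<le> 1 \<Longrightarrow> \<bar>flw t x\<bar> \<le> 1"
  using flw_bound'[of x t] by (auto simp: abs_le_iff)

lemma flw_int_bound: "\<bar>x\<bar> < 1 \<Longrightarrow> \<bar>flw t x\<bar> < 1"
  using flw_int tanh_abs_lt by auto

lemma flw_add: "\<bar>x\<bar> \<le> 1 \<Longrightarrow> flw (t + s) x = flw t (flw s x)"
proof -
  assume a: "\<bar>x\<bar> \<le> 1"
  show ?thesis
  proof (cases "\<bar>x\<bar> < 1")
    case True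
    then show ?thesis using flw_int_bound[OF True, of s]
      by (simp add: flw_int artanh_tanh_real algebra_simps)
  next
    case False
    then have "x = 1 \<or> x = -1" using a by auto
    then show ?thesis by auto
  qed
qed

lemma flw_minus_x: "\<bar>x\<bar> \<le> 1 \<Longrightarrow> flw t x - x = tanh t * (1 - x^2) / (1 + x * tanh t)"
  using den_pos[of x t] unfolding flw_def by (simp add: field_simps power2_eq_square)

lemma flw_ge: "\<bar>x\<bar> \<le> 1 \<Longrightarrow> 0 \<le> t \<Longrightarrow> x \<le> flw t x"
proof -
  assume a: "\<bar>x\<bar> \<le> 1" "0 \<le> t"
  have "x^2 \<le> 1" using a by (simp add: abs_square_le_1)
  hence "0 \<le> tanh t * (1 - x^2) / (1 + x * tanh t)" using a den_pos[of x t]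
    by (intro divide_nonneg_pos mult_nonneg_nonneg) auto
  thus ?thesis using flw_minus_x[OF a(1), of t] by simp
qed

lemma flw_tmono: "\<bar>x\<bar> \<le> 1 \<Longrightarrow> t \<le> t' \<Longrightarrow> flw t x \<le> flw t' x"
  using flw_ge[OF flw_bound, of x "t' - t" t] flw_add[of x "t' - t" t] by simp

lemma flw1_gap: "\<bar>x\<bar> \<le> h \<Longrightarrow> h < 1 \<Longrightarrow> tanh 1 * (1 - h^2) / 2 \<le> flw 1 x - x"
proof -
  assume a: "\<bar>x\<bar> \<le> h" "h < 1"
  have x1: "\<bar>x\<bar> \<le> 1" using a by simp
  have t1: "0 < tanh (1::real)" "tanh (1::real) < 1" using tanh_abs_lt[of 1] by auto
  have "x^2 \<le> h^2" using a by (metis abs_ge_zero order_trans power2_abs power_mono)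
  hence "1 - h^2 \<le> 1 - x^2" by simp
  have h2: "0 \<le> 1 - h^2"
  proof -
    have "\<bar>h\<bar> \<le> 1" using a by auto
    hence "h^2 \<le> 1" by (simp add: abs_square_le_1)
    thus ?thesis by simp
  qed
  have den: "0 < 1 + x * tanh 1" "1 + x * tanh 1 \<le> 2"
  proof -
    have "\<bar>x\<bar> * \<bar>tanh 1\<bar> \<le> 1" using x1 t1 by (intro mult_le_one) auto
    hence "x * tanh 1 \<le> 1" by (metis abs_le_D1 abs_mult)
    thus "0 < 1 + x * tanh 1" "1 + x * tanh 1 \<le> 2" using den_pos[OF x1, of 1] by auto
  qed
  have "tanh 1 * (1 - h^2) / 2 \<le> tanh 1 * (1 - x^2) / 2"
    using \<open>1 - h^2 \<le> 1 - x^2\<close> t1 by (intro divide_right_mono mult_left_mono) auto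
  also have "\<dots> \<le> tanh 1 * (1 - x^2) / (1 + x * tanh 1)"
    using den t1 h2 \<open>1 - h^2 \<le> 1 - x^2\<close> by (intro divide_left_mono mult_nonneg_nonneg mult_pos_pos) auto
  finally show ?thesis using flw_minus_x[OF x1, of 1] by simp
qed

lemma memX: "(x \<in> {-1..1::real}) \<longleftrightarrow> \<bar>x\<bar> \<le> 1" by auto

lemma isflow: "is_flow {-1..1::real} dist flw"
proof -
  have c: "continuous_on (UNIV \<times> {-1..1::real}) (\<lambda>p. (snd p + tanh (fst p)) / (1 + snd p * tanh (fst p)))"
    using den_pos by (intro continuous_intros) (auto simp: memX intro!: less_imp_neq[symmetric])
  have c2: "continuous_on (UNIV \<times> {-1..1::real}) (\<lambda>(t, x). flw t x)"
    by (rule continuous_on_cong[THEN iffD1, OF refl _ c]) (auto simp: flw_def)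
  have m: "(\<lambda>(t, x). flw t x) \<in> UNIV \<times> {-1..1} \<rightarrow> {-1..1}"
    using flw_bound' by auto
  have "prod_topology euclideanreal (top_of_set {-1..1::real}) = top_of_set (UNIV \<times> {-1..1})"
    by (metis prod_topology_subtopology_eu subtopology_UNIV)
  then show ?thesis unfolding is_flow_def mtop using c2 m flw_add by (auto simp: memX)
qed

lemma Sing_eq: "Sing {-1..1::real} flw = {-1, 1}"
proof -
  have "\<not> (\<forall>t. flw t x = x)" if "\<bar>x\<bar> < 1" for x
  proof -
    have "0 < tanh 1 * (1 - \<bar>x\<bar>^2) / 2" using that tanh_abs_lt[of 1]
      by (intro divide_pos_pos mult_pos_pos) (auto simp: abs_square_less_1)
    hence "flw 1 x \<noteq> x" using flw1_gap[of x "\<bar>x\<bar>"] that by auto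
    thus ?thesis by blast
  qed
  show ?thesis unfolding Sing_def memX
  proof (intro set_eqI iffI)
    fix x assume "x \<in> {x. \<bar>x\<bar> \<le> 1 \<and> (\<forall>t. flw t x = x)}"
    then have a: "\<bar>x\<bar> \<le> 1" "\<forall>t. flw t x = x" by auto
    then have "\<not> \<bar>x\<bar> < 1" using \<open>\<And>x. \<bar>x\<bar> < 1 \<Longrightarrow> \<not> (\<forall>t. flw t x = x)\<close> by blast
    then show "x \<in> {-1, 1}" using a by (auto simp: abs_if split: if_splits)
  qed auto
qed

lemma distS: "\<bar>z\<bar> \<le> 1 \<Longrightarrow> dist_set {-1..1::real} dist z (Sing {-1..1} flw) = 1 - \<bar>z\<bar>"
  unfolding Sing_eq dist_set_def by (simp add: dist_real_def cInf_insert inf_min)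

lemma close_U: "\<bar>x\<bar> < 1 \<Longrightarrow> \<bar>y::real\<bar> \<le> 1 \<Longrightarrow> 0 \<le> \<delta> \<Longrightarrow> \<delta> \<le> 1/2 \<Longrightarrow> \<bar>x - y\<bar> \<le> \<delta> * (1 - \<bar>x\<bar>)
  \<Longrightarrow> \<bar>y\<bar> < 1 \<and> \<bar>artanh x - artanh y\<bar> \<le> 2 * \<delta>"
proof -
  assume a: "\<bar>x\<bar> < 1" "\<bar>y\<bar> \<le> 1" "0 \<le> \<delta>" "\<delta> \<le> 1/2" "\<bar>x - y\<bar> \<le> \<delta> * (1 - \<bar>x\<bar>)"
  define r where "r = \<bar>x\<bar> + \<delta> * (1 - \<bar>x\<bar>)"
  have yr: "\<bar>y\<bar> \<le> r" "\<bar>x\<bar> \<le> r" using a unfolding r_def by (auto simp: abs_if split: if_splits)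
  have "\<delta> * (1 - \<bar>x\<bar>) \<le> (1/2) * (1 - \<bar>x\<bar>)" using a by (intro mult_right_mono) auto
  hence r1: "1 - r \<ge> (1 - \<bar>x\<bar>)/2" unfolding r_def by simp
  hence r2: "r < 1" using a by simp
  have r0: "0 \<le> r" unfolding r_def using a by simp
  have "1 - r \<le> 1 - r^2" using r0 r2 by (simp add: power2_eq_square mult_left_le_one_le)
  hence den: "(1 - \<bar>x\<bar>)/2 \<le> 1 - r^2" using r1 by simp
  have "\<bar>artanh x - artanh y\<bar> \<le> \<bar>x - y\<bar> / (1 - r^2)" using artanh_lip yr r2 by blast
  also have "\<dots> \<le> (\<delta> * (1 - \<bar>x\<bar>)) / ((1 - \<bar>x\<bar>)/2)"
    using a den by (intro frac_le) auto
  also have "\<dots> = 2 * \<delta>" using a by (simp add: field_simps)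
  finally show ?thesis using yr r2 by simp
qed

lemma flw_U_lip: "\<bar>x\<bar> < 1 \<Longrightarrow> \<bar>y\<bar> < 1 \<Longrightarrow> \<bar>flw t x - flw t y\<bar> \<le> \<bar>artanh x - artanh y\<bar>"
  using tanh_lip[of "artanh x + t" "artanh y + t"] by (simp add: flw_int)

lemma sing_equi: "singular_equicontinuous {-1..1::real} dist flw"
  unfolding singular_equicontinuous_def
proof (intro allI impI)
  fix \<epsilon> :: real assume e: "0 < \<epsilon>"
  show "\<exists>\<delta>>0. \<forall>x\<in>{-1..1}. \<forall>y\<in>{-1..1}. dist x y \<le> \<delta> * dist_set {-1..1} dist x (Sing {-1..1} flw) \<longrightarrow>
          (\<forall>t. dist (flw t x) (flw t y) \<le> \<epsilon>)"
  proof (intro exI[of _ "min (1/2) (\<epsilon>/2)"] conjI ballI impI allI)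
    fix x y t assume xy: "x \<in> {-1..1::real}" "y \<in> {-1..1::real}"
      and h: "dist x y \<le> min (1/2) (\<epsilon>/2) * dist_set {-1..1} dist x (Sing {-1..1} flw)"
    have h': "\<bar>x - y\<bar> \<le> min (1/2) (\<epsilon>/2) * (1 - \<bar>x\<bar>)" using h xy distS by (auto simp: memX dist_real_def)
    show "dist (flw t x) (flw t y) \<le> \<epsilon>"
    proof (cases "\<bar>x\<bar> < 1")
      case True
      from close_U[OF True _ _ _ h'] xy e have "\<bar>y\<bar> < 1" "\<bar>artanh x - artanh y\<bar> \<le> 2 * min (1/2) (\<epsilon>/2)"
        by (auto simp: memX)
      then show ?thesis using flw_U_lip[OF True, of y t] by (auto simp: dist_real_def)
    next
      case False
      then have "\<bar>x\<bar> = 1" using xy by (auto simp: memX)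
      then have "\<bar>x - y\<bar> \<le> 0" using h' by simp
      then have "x = y" by simp
      then show ?thesis using e by simp
    qed
  qed (use e in auto)
qed

lemma sing_exp_core:
  assumes e: "0 < \<epsilon>" and xy: "x \<in> {-1..1::real}" "y \<in> {-1..1::real}"
      and h: "\<forall>t. dist (flw t x) (flw (s t) y) \<le> min (1/2) (\<epsilon>/2) * dist_set {-1..1} dist (flw t x) (Sing {-1..1} flw)"
  shows "\<exists>t0. flw (s t0) y \<in> orbit_seg flw {t0 - \<epsilon> .. t0 + \<epsilon>} x"
proof -
    define y' where "y' = flw (s 0) y"
    have y'X: "\<bar>y'\<bar> \<le> 1" using flw_bound xy by (auto simp: y'_def memX)
    have h': "\<bar>x - y'\<bar> \<le> min (1/2) (\<epsilon>/2) * (1 - \<bar>x\<bar>)" using h[rule_format, of 0] xy distS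
      by (auto simp: memX dist_real_def y'_def)
    have "\<exists>c. \<bar>c\<bar> \<le> \<epsilon> \<and> flw c x = y'"
    proof (cases "\<bar>x\<bar> < 1")
      case True
      from close_U[OF True y'X _ _ h'] e have u: "\<bar>y'\<bar> < 1" "\<bar>artanh x - artanh y'\<bar> \<le> 2 * min (1/2) (\<epsilon>/2)"
        by auto
      show ?thesis
        by (rule exI[of _ "artanh y' - artanh x"]) (use u True in \<open>auto simp: flw_int tanh_artanh_r\<close>)
    next
      case False
      then have "\<bar>x\<bar> = 1" using xy by (auto simp: memX)
      then have "\<bar>x - y'\<bar> \<le> 0" using h' by simp
      then have "x = y'" by simp
      then show ?thesis using e by (intro exI[of _ 0]) simp
    qed
    then obtain c where "\<bar>c\<bar> \<le> \<epsilon>" "flw c x = y'" by blast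
    then have "flw (s 0) y \<in> orbit_seg flw {0 - \<epsilon> .. 0 + \<epsilon>} x"
      by (auto simp: orbit_seg_def y'_def image_iff intro!: bexI[of _ c])
    then show ?thesis by blast
qed

lemma sing_exp: "singular_expansive {-1..1::real} dist flw"
  unfolding singular_expansive_def
proof (intro allI impI)
  fix \<epsilon> :: real assume e: "0 < \<epsilon>"
  have "min (1/2) (\<epsilon>/2) > 0" using e by simp
  then show "\<exists>\<delta>>0. \<forall>x\<in>{-1..1}. \<forall>y\<in>{-1..1}. \<forall>s. inc_homeo s \<and>
        (\<forall>t. dist (flw t x) (flw (s t) y) \<le> \<delta> * dist_set {-1..1} dist (flw t x) (Sing {-1..1} flw))
        \<longrightarrow> (\<exists>t0. flw (s t0) y \<in> orbit_seg flw {t0 - \<epsilon> .. t0 + \<epsilon>} x)"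
    using sing_exp_core[OF e] by blast
qed

lemma not_equi: "\<not> equicontinuous_flow {-1..1::real} dist flw"
proof
  assume "equicontinuous_flow {-1..1::real} dist flw"
  then obtain \<delta> where d: "\<delta> > 0" "\<forall>x\<in>{-1..1}. \<forall>y\<in>{-1..1}. dist x y \<le> \<delta> \<longrightarrow> (\<forall>t. dist (flw t x) (flw t y) \<le> 1/2)"
    unfolding equicontinuous_flow_def by (meson zero_less_divide_1_iff zero_less_numeral)
  define y where "y = -1 + min \<delta> 1"
  have y: "\<bar>y\<bar> < 1" "\<bar>y\<bar> \<le> 1" "dist (-1) y \<le> \<delta>" using d unfolding y_def by (auto simp: dist_real_def)
  have m: "(-1::real) \<in> {-1..1}" "y \<in> {-1..1}" using y by (auto simp: abs_le_iff)
  have "\<forall>t. dist (flw t (-1)) (flw t y) \<le> 1/2" using d(2) m y(3) by blast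
  hence "dist (flw (- artanh y) (-1)) (flw (- artanh y) y) \<le> 1/2" by blast
  moreover have "flw (- artanh y) y = 0" using y by (simp add: flw_int)
  ultimately show False by (simp add: dist_real_def)
qed




lemma Ssum_succ: "Ssum ts (i+1) = Ssum ts i + ts i"
proof (cases "i \<ge> 0")
  case True
  have "{0..<i+1} = insert i {0..<i}" using True by auto
  then show ?thesis using True by (simp add: Ssum_def)
next
  case False
  have e: "{i..<0} = insert i {i+1..<0}" using False by auto
  show ?thesis
  proof (cases "i = -1")
    case True
    have "{-1..<0::int} = {-1}" by auto
    then show ?thesis using True by (simp add: Ssum_def)
  next
    case False
    then have "\<not> 0 \<le> i + 1" using \<open>\<not> i \<ge> 0\<close> by simp
    then show ?thesis using \<open>\<not> i \<ge> 0\<close> e by (simp add: Ssum_def)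
  qed
qed

lemma Ssum_mono: "(\<And>i. ts i \<ge> 0) \<Longrightarrow> i \<le> j \<Longrightarrow> Ssum ts i \<le> Ssum ts j"
proof -
  assume p: "\<And>i. ts i \<ge> 0" and ij: "i \<le> j"
  show ?thesis using ij
  proof (induction j rule: int_ge_induct)
    case base then show ?case by simp
  next
    case (step k)
    then show ?case using p[of k] Ssum_succ[of ts k] by simp
  qed
qed

lemma artanh_mono: "\<bar>a\<bar> < 1 \<Longrightarrow> \<bar>b\<bar> < 1 \<Longrightarrow> a \<le> b \<Longrightarrow> artanh a \<le> artanh (b::real)"
  using artanh_lip_aux[of a b "max \<bar>a\<bar> \<bar>b\<bar>"] by (cases "a = b") auto

lemma artanh_bound: "\<bar>z\<bar> \<le> h \<Longrightarrow> h < 1 \<Longrightarrow> \<bar>artanh z\<bar> \<le> artanh (h::real)"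
proof -
  assume a: "\<bar>z\<bar> \<le> h" "h < 1"
  have "artanh z \<le> artanh h" using a by (intro artanh_mono) auto
  moreover have "artanh (-h) \<le> artanh z" using a by (intro artanh_mono) auto
  moreover have "artanh (-h) = - artanh h" using a by (intro artanh_minus_real) auto
  ultimately show ?thesis by auto
qed

lemma shadow_core:
  fixes xs :: "int \<Rightarrow> real" and ts :: "int \<Rightarrow> real"
  assumes e: "0 < e" "e \<le> 1"
    and hdef: "h = 1 - e/4" and thdef: "\<theta> = 1 - e/2" and Kdef: "K = 1/(1-h^2)" and Adef: "A = artanh h"
    and d0: "0 < \<delta>" and dg: "\<delta> \<le> tanh 1 * (1-h^2)/2" and de: "\<delta> * (1 + (4*A+3)*K) \<le> e/2"
    and po1: "\<And>i. \<bar>xs i\<bar> \<le> 1" and po2: "\<And>i. ts i \<ge> 1" and po3: "\<And>i. \<bar>flw (ts i) (xs i) - xs (i+1)\<bar> \<le> \<delta>"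
  shows "\<exists>x0. \<bar>x0\<bar> \<le> 1 \<and> (\<forall>i t. Ssum ts i \<le> t \<and> t < Ssum ts (i+1) \<longrightarrow> \<bar>flw t x0 - flw (t - Ssum ts i) (xs i)\<bar> \<le> e)"
proof -
  define S where "S = Ssum ts"
  have Sdef: "Ssum ts = S" by (simp add: S_def)
  define p where "p = (\<lambda>i. flw (ts i) (xs i))"
  have h1: "h < 1" "3/4 \<le> h" using e hdef by auto
  have hsq: "h^2 < 1"
  proof -
    have "\<bar>h\<bar> < 1" using h1 by auto
    thus ?thesis by (simp add: abs_square_less_1)
  qed
  have hh: "0 < 1 - h^2" "1 - h^2 \<le> 1" using hsq by auto
  have K1: "1 \<le> K" unfolding Kdef using hh by (simp add: divide_simps)
  have A0: "0 \<le> A" using artanh_mono[of 0 h] h1 Adef by simp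
  have "3 * 1 \<le> (4*A+3)*K" using A0 K1 by (intro mult_mono) auto
  hence den4: "4 \<le> 1 + (4*A+3)*K" by simp
  have "\<delta> * 4 \<le> \<delta> * (1 + (4*A+3)*K)" using den4 d0 by (intro mult_left_mono) auto
  hence d8: "\<delta> * 4 \<le> e/2" using de by linarith
  have "3 * K \<le> (4*A+3)*K" using A0 K1 by (intro mult_right_mono) auto
  hence "\<delta> * (3*K) \<le> \<delta> * ((4*A+3)*K)" using d0 by (intro mult_left_mono) auto
  hence dK: "\<delta> * K \<le> 1/6" using de e d0 by (simp add: algebra_simps)
  have dK0: "0 \<le> \<delta> * K" using d0 K1 by simp
  have th: "\<theta> + \<delta> \<le> h" "0 < \<theta>" "\<theta> < 1" using thdef hdef d8 e by auto
  have gap: "x + \<delta> \<le> flw 1 x" if "\<bar>x\<bar> \<le> \<theta>" for x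
  proof -
    have "\<bar>x\<bar> \<le> h" using that th d0 by linarith
    then have "tanh 1 * (1 - h^2) / 2 \<le> flw 1 x - x" using flw1_gap[of x h] h1 by simp
    then show ?thesis using dg by linarith
  qed
  have pge: "flw 1 (xs i) \<le> p i" for i using flw_tmono[of "xs i" 1 "ts i"] po1 po2 p_def by simp
  have pclose: "xs (i+1) - \<delta> \<le> p i \<and> p i \<le> xs (i+1) + \<delta>" for i using po3[of i] p_def by (auto simp: abs_le_iff)
  have H: "\<theta> \<le> xs (i+1)" if "\<theta> \<le> xs i" for i
  proof -
    have "flw 1 \<theta> \<le> flw 1 (xs i)" using flw_mono[of \<theta> "xs i" 1] that po1[of i] th by auto
    moreover have "\<theta> + \<delta> \<le> flw 1 \<theta>" using gap[of \<theta>] th by auto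
    ultimately show ?thesis using pge[of i] pclose[of i] by linarith
  qed
  have Hn: "\<theta> \<le> xs j" if "i \<le> j" "\<theta> \<le> xs i" for i j
    using that(1) by (induction j rule: int_ge_induct) (use that(2) H in auto)
  have L: "xs i < -\<theta>" if "xs (i+1) < -\<theta>" for i
  proof (rule ccontr)
    assume "\<not> xs i < -\<theta>"
    hence "flw 1 (-\<theta>) \<le> flw 1 (xs i)" using flw_mono[of "-\<theta>" "xs i" 1] po1[of i] th by auto
    moreover have "-\<theta> + \<delta> \<le> flw 1 (-\<theta>)" using gap[of "-\<theta>"] th by auto
    ultimately show False using pge[of i] pclose[of i] that by linarith
  qed
  have Ln: "xs i < -\<theta> \<longrightarrow> xs j < -\<theta>" if "j \<le> i" for i j
    using that by (induction i rule: int_ge_induct) (use L in blast)+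
  have Utr: "artanh (p i) = artanh (xs i) + ts i" if "\<bar>xs i\<bar> < 1" for i
    using that by (simp add: p_def flw_int artanh_tanh_real)
  have M: "\<bar>p i\<bar> \<le> h \<and> \<bar>artanh (xs (i+1)) - artanh (p i)\<bar> \<le> \<delta> * K"
    if "-\<theta> \<le> xs (i+1)" "xs (i+1) < \<theta>" for i
  proof -
    have a: "\<bar>p i\<bar> \<le> h" "\<bar>xs (i+1)\<bar> \<le> h" using pclose[of i] that th by auto
    have "\<bar>artanh (xs (i+1)) - artanh (p i)\<bar> \<le> \<bar>xs (i+1) - p i\<bar> / (1 - h^2)"
      using artanh_lip[OF a(2) a(1) h1(1)] .
    also have "\<dots> \<le> \<delta> / (1 - h^2)" using po3[of i] hh unfolding p_def
      by (intro divide_right_mono) (auto simp: abs_minus_commute)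
    also have "\<dots> = \<delta> * K" by (simp add: Kdef)
    finally show ?thesis using a by simp
  qed
  have Mup: "artanh (xs i) + 1/2 \<le> artanh (xs (i+1))"
    if "\<bar>xs i\<bar> < 1" "-\<theta> \<le> xs (i+1)" "xs (i+1) < \<theta>" for i
    using M[OF that(2,3)] Utr[OF that(1)] po2[of i] dK by (auto simp: abs_le_iff)
  have Abd: "\<bar>artanh z\<bar> \<le> A" if "\<bar>z\<bar> \<le> h" for z using artanh_bound[OF that h1(1)] Adef by simp
  have inter: "\<bar>x\<bar> < 1" "\<bar>x\<bar> \<le> h" if "-\<theta> \<le> x" "x < \<theta>" for x using that th d0 by auto
  have Smono: "S a \<le> S b" if "a \<le> b" for a b
    unfolding S_def using Ssum_mono[of ts a b] po2 that by (meson dual_order.trans zero_le_one)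
  have Ssucc: "S (i+1) = S i + ts i" for i unfolding S_def by (rule Ssum_succ)
  consider (I) "\<forall>i. xs i < -\<theta>" | (II) "\<forall>i. -\<theta> \<le> xs i" | (III) i0 j0 where "xs i0 < -\<theta>" "-\<theta> \<le> xs j0"
    by (meson not_less)
  then show ?thesis
  proof cases
    case I
    show ?thesis
    proof (intro exI[of _ "-1"] conjI allI impI)
      show "\<bar>-1\<bar> \<le> (1::real)" by simp
      fix i t assume t: "Ssum ts i \<le> t \<and> t < Ssum ts (i+1)"
      have "t - S i \<le> ts i" using t Ssucc[of i] by (simp add: Sdef)
      hence y1: "flw (t - S i) (xs i) \<le> p i" using flw_tmono[OF po1[of i]] by (simp add: p_def)
      have y2: "-1 \<le> flw (t - S i) (xs i)" using flw_bound'[of "xs i" "t - S i"] po1[of i] by (auto simp: abs_le_iff)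
      have "flw (t - S i) (xs i) < -\<theta> + \<delta>" using y1 pclose[of i] I[rule_format, of "i+1"] by linarith
      then show "\<bar>flw t (-1) - flw (t - Ssum ts i) (xs i)\<bar> \<le> e"
        using y2 thdef d8 e unfolding Sdef by (auto simp: abs_le_iff)
    qed
  next
    case II
    have allhigh: "\<forall>i. \<theta> \<le> xs i"
    proof (rule ccontr)
      assume "\<not> (\<forall>i. \<theta> \<le> xs i)"
      then obtain j where j: "xs j < \<theta>" by (auto simp: not_le)
      have low: "xs (j - int n) < \<theta>" for n::nat
      proof (rule ccontr)
        assume "\<not> xs (j - int n) < \<theta>"
        then have "\<theta> \<le> xs j" using Hn[of "j - int n" j] by simp
        then show False using j by simp
      qed
      have grow: "artanh (xs (j - int n)) + real n / 2 \<le> artanh (xs j)" for n::nat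
      proof (induction n)
        case 0 then show ?case by simp
      next
        case (Suc n)
        have e1: "j - int (Suc n) + 1 = j - int n" by simp
        have i1: "\<bar>xs (j - int (Suc n))\<bar> < 1" using inter(1)[of "xs (j - int (Suc n))"] II low[of "Suc n"] by simp
        have a2: "-\<theta> \<le> xs (j - int (Suc n) + 1)" using II by simp
        have a3: "xs (j - int (Suc n) + 1) < \<theta>" using low[of n] e1 by simp
        have "artanh (xs (j - int (Suc n))) + 1/2 \<le> artanh (xs (j - int (Suc n) + 1))"
          using Mup[OF i1 a2 a3] .
        then have "artanh (xs (j - int (Suc n))) + 1/2 \<le> artanh (xs (j - int n))" unfolding e1 .
        moreover have "real (Suc n) / 2 = real n / 2 + 1/2" by simp
        ultimately show ?case using Suc.IH by linarith
      qed
      define n where "n = nat (ceiling (4*A)) + 1"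
      have "\<bar>xs (j - int n)\<bar> \<le> h" using inter(2)[of "xs (j - int n)"] II low[of n] by simp
      then have "- A \<le> artanh (xs (j - int n))" using Abd[of "xs (j - int n)"] by linarith
      moreover have "\<bar>xs j\<bar> \<le> h" using inter(2)[of "xs j"] II j by simp
      then have "artanh (xs j) \<le> A" using Abd[of "xs j"] by linarith
      moreover have "4 * A + 1 \<le> real n"
      proof -
        have c1: "4*A \<le> real_of_int \<lceil>4*A\<rceil>" by (rule le_of_int_ceiling)
        have c2: "0 \<le> \<lceil>4*A\<rceil>" using A0 by simp
        have "real n = real_of_int \<lceil>4*A\<rceil> + 1" unfolding n_def using c2 by simp
        then show ?thesis using c1 by linarith
      qed
      ultimately show False using grow[of n] by linarith
    qed
    show ?thesis
    proof (intro exI[of _ "1"] conjI allI impI)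
      show "\<bar>1\<bar> \<le> (1::real)" by simp
      fix i t assume t: "Ssum ts i \<le> t \<and> t < Ssum ts (i+1)"
      have "0 \<le> t - S i" using t by (simp add: Sdef)
      hence y1: "xs i \<le> flw (t - S i) (xs i)" using flw_ge[OF po1[of i]] by simp
      have y2: "flw (t - S i) (xs i) \<le> 1" using flw_bound'[of "xs i" "t - S i"] po1[of i] by (auto simp: abs_le_iff)
      show "\<bar>flw t 1 - flw (t - Ssum ts i) (xs i)\<bar> \<le> e"
        using y1 y2 allhigh[rule_format, of i] thdef e unfolding Sdef by (auto simp: abs_le_iff)
    qed
  next
    case III
    have i0j0: "i0 < j0"
    proof (rule ccontr)
      assume "\<not> i0 < j0"
      then show False using Ln[where i=i0 and j=j0] III by auto
    qed
    define Ls where "Ls = {k. i0 \<le> k \<and> k \<le> j0 \<and> xs k < -\<theta>}"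
    have fin: "finite Ls" by (rule finite_subset[of _ "{i0..j0}"]) (auto simp: Ls_def)
    have ne: "i0 \<in> Ls" using i0j0 III by (simp add: Ls_def)
    define m where "m = Max Ls"
    have mL: "m \<in> Ls" using fin ne Max_in m_def by blast
    have xm: "xs m < -\<theta>" "i0 \<le> m" using mL Ls_def by auto
    have after: "-\<theta> \<le> xs k" if "m < k" for k
    proof (rule ccontr)
      assume "\<not> -\<theta> \<le> xs k"
      hence xk: "xs k < -\<theta>" by simp
      show False
      proof (cases "k \<le> j0")
        case True
        then have "k \<in> Ls" using xk xm that by (simp add: Ls_def)
        then have "k \<le> m" using Max_ge[OF fin] m_def by simp
        then show False using that by simp
      next
        case False
        then show False using Ln[where i=k and j=j0] xk III by auto
      qed
    qed
    have pm: "-\<theta> - \<delta> \<le> p m" using pclose[of m] after[of "m+1"] by auto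
    have xm_int: "\<bar>xs m\<bar> < 1"
    proof -
      have "xs m \<noteq> -1"
      proof
        assume "xs m = -1"
        then have "p m = -1" by (simp add: p_def)
        then show False using pm th h1 by linarith
      qed
      then show ?thesis using po1[of m] xm th by (auto simp: abs_le_iff abs_less_iff)
    qed
    define zz where "zz = (\<lambda>i. flw (S i - S m) (xs m))"
    define x0 where "x0 = flw (- S m) (xs m)"
    have zz_int: "\<bar>zz i\<bar> < 1" for i using flw_int_bound[OF xm_int] zz_def by simp
    have zzm: "zz m = xs m" by (simp add: zz_def)
    have zz_succ: "zz (i+1) = flw (ts i) (zz i)" for i
    proof -
      have eq: "S (i+1) - S m = ts i + (S i - S m)" using Ssucc[of i] by simp
      show ?thesis unfolding zz_def eq by (rule flw_add[OF po1[of m]])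
    qed
    have ztr: "artanh (zz (i+1)) = artanh (zz i) + ts i" for i
      using zz_succ[of i] zz_int[of i] by (simp add: flw_int artanh_tanh_real)
    have z_t': "flw t x0 = flw (t - S m) (xs m)" for t
      using flw_add[OF po1[of m], of t "- S m"] unfolding x0_def by simp
    have z_t: "flw t x0 = flw (t - S i) (zz i)" for t i
    proof -
      have "flw (t - S i) (zz i) = flw ((t - S i) + (S i - S m)) (xs m)"
        unfolding zz_def by (rule flw_add[OF po1[of m], symmetric])
      then show ?thesis using z_t' by simp
    qed
    define P where "P = (\<lambda>n::nat. \<forall>k::nat. 1 \<le> k \<and> k \<le> n \<longrightarrow> xs (m + int k) < \<theta>)"
    have Pdown: "P a" if "P b" "a \<le> b" for a b using that by (auto simp: P_def)
    have xint: "\<bar>xs (m + int k)\<bar> < 1" "\<bar>xs (m + int k)\<bar> \<le> h" if "P n" "1 \<le> k" "k \<le> n" for n k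
    proof -
      have "-\<theta> \<le> xs (m + int k)" using after[of "m + int k"] that by simp
      moreover have "xs (m + int k) < \<theta>" using that by (auto simp: P_def)
      ultimately show "\<bar>xs (m + int k)\<bar> < 1" "\<bar>xs (m + int k)\<bar> \<le> h" using inter by auto
    qed
    have xint0: "\<bar>xs (m + int k)\<bar> < 1" if "P n" "k \<le> n" for n k
      using xint[of n k] that xm_int by (cases "k = 0") auto
    have C1: "P n \<Longrightarrow> 1 \<le> n \<Longrightarrow> artanh (p m) - \<delta> * K + (real n - 1) / 2 \<le> artanh (xs (m + int n))" for n
    proof (induction n)
      case 0 then show ?case by simp
    next
      case (Suc n)
      show ?case
      proof (cases "n = 0")
        case True
        have "P (Suc 0)" using Suc.prems True by simp
        then have "xs (m + int 1) < \<theta>" unfolding P_def by (auto dest: spec[of _ 1])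
        then have "xs (m + 1) < \<theta>" by simp
        then have "\<bar>artanh (xs (m+1)) - artanh (p m)\<bar> \<le> \<delta> * K" using M[of m] after[of "m+1"] by auto
        then show ?thesis using True by (auto simp: abs_le_iff)
      next
        case False
        have Pn: "P n" using Suc.prems Pdown[of "Suc n" n] by simp
        have IH: "artanh (p m) - \<delta> * K + (real n - 1) / 2 \<le> artanh (xs (m + int n))"
          using Suc.IH Pn False by simp
        have a1: "\<bar>xs (m + int n)\<bar> < 1" using xint[OF Pn, of n] False by simp
        have a2: "-\<theta> \<le> xs (m + int n + 1)" using after[of "m + int n + 1"] by simp
        have eqi: "m + int (Suc n) = m + int n + 1" by simp
        have "xs (m + int (Suc n)) < \<theta>" using Suc.prems(1)[unfolded P_def, rule_format, of "Suc n"] by simp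
        then have a3: "xs (m + int n + 1) < \<theta>" unfolding eqi .
        have "artanh (xs (m + int n)) + 1/2 \<le> artanh (xs (m + int n + 1))" using Mup[OF a1 a2 a3] .
        moreover have "(real (Suc n) - 1)/2 = (real n - 1)/2 + 1/2" by (simp add: field_simps)
        ultimately have "artanh (p m) - \<delta> * K + (real (Suc n) - 1) / 2 \<le> artanh (xs (m + int n + 1))"
          using IH by linarith
        then show ?thesis unfolding eqi .
      qed
    qed
    have pmh: "\<bar>p m\<bar> \<le> h" if "P n" "1 \<le> n" for n
    proof -
      have "xs (m + int 1) < \<theta>" using that(1)[unfolded P_def, rule_format, of 1] that(2) by simp
      then have "xs (m + 1) < \<theta>" by simp
      then show ?thesis using M[of m] after[of "m+1"] by auto
    qed
    have Pbound: "real n \<le> 4*A + 2" if "P n" for n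
    proof (cases "n = 0")
      case True then show ?thesis using A0 by simp
    next
      case False
      then have n1: "1 \<le> n" by simp
      have "- A \<le> artanh (p m)" using Abd[OF pmh[OF that n1]] by auto
      moreover have "artanh (xs (m + int n)) \<le> A" using Abd[OF xint(2)[OF that n1 le_refl]] by auto
      ultimately have "(real n - 1) / 2 \<le> 2*A + 1/6" using C1[OF that n1] dK by linarith
      thus ?thesis by (simp add: field_simps)
    qed
    have C2: "P n \<Longrightarrow> \<bar>artanh (xs (m + int n)) - artanh (zz (m + int n))\<bar> \<le> real n * (\<delta> * K)" for n
    proof (induction n)
      case 0 then show ?case by (simp add: zzm)
    next
      case (Suc n)
      have Pn: "P n" using Suc.prems Pdown[of "Suc n" n] by simp
      have IH: "\<bar>artanh (xs (m + int n)) - artanh (zz (m + int n))\<bar> \<le> real n * (\<delta> * K)" using Suc.IH Pn by simp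
      have a1: "\<bar>xs (m + int n)\<bar> < 1" using xint0[OF Pn le_refl] .
      have a2: "-\<theta> \<le> xs (m + int n + 1)" using after[of "m + int n + 1"] by simp
      have eqi: "m + int (Suc n) = m + int n + 1" by simp
      have "xs (m + int (Suc n)) < \<theta>" using Suc.prems[unfolded P_def, rule_format, of "Suc n"] by simp
      then have a3: "xs (m + int n + 1) < \<theta>" unfolding eqi .
      have "\<bar>artanh (xs (m + int n + 1)) - artanh (p (m + int n))\<bar> \<le> \<delta> * K" using M[OF a2 a3] by simp
      moreover have "artanh (p (m + int n)) = artanh (xs (m + int n)) + ts (m + int n)" using Utr[OF a1] .
      moreover have "artanh (zz (m + int n + 1)) = artanh (zz (m + int n)) + ts (m + int n)" using ztr .
      ultimately have "\<bar>artanh (xs (m + int n + 1)) - artanh (zz (m + int n + 1))\<bar> \<le> \<delta> * K + real n * (\<delta> * K)"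
        using IH by (auto simp: abs_le_iff)
      then show ?case unfolding eqi by (simp add: algebra_simps)
    qed
    define N where "N = nat (ceiling (4*A + 2))"
    define Q where "Q = {n. P n}"
    have QN: "Q \<subseteq> {..N}"
    proof
      fix n assume "n \<in> Q"
      then have "real n \<le> 4*A + 2" using Pbound Q_def by simp
      moreover have "4*A + 2 \<le> real_of_int \<lceil>4*A + 2\<rceil>" by (rule le_of_int_ceiling)
      moreover have "0 \<le> \<lceil>4*A + 2\<rceil>" using A0 by simp
      ultimately have "real n \<le> real N" unfolding N_def
        using le_of_int_ceiling[of "4*A"] by simp linarith
      then show "n \<in> {..N}" by simp
    qed
    have Qfin: "finite Q" using QN finite_subset by blast
    have Q0: "0 \<in> Q" by (simp add: Q_def P_def)
    define n0 where "n0 = Max Q"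
    have "n0 \<in> Q" using Max_in[OF Qfin] Q0 n0_def by blast
    then have Pn0: "P n0" by (simp add: Q_def)
    have notP: "\<not> P (Suc n0)"
    proof
      assume "P (Suc n0)"
      then have "Suc n0 \<in> Q" by (simp add: Q_def)
      then have "Suc n0 \<le> n0" using Max_ge[OF Qfin] n0_def by simp
      then show False by simp
    qed
    define j where "j = m + int n0 + 1"
    have xj: "\<theta> \<le> xs j"
    proof -
      obtain k where k: "1 \<le> k" "k \<le> Suc n0" "\<not> xs (m + int k) < \<theta>" using notP by (auto simp: P_def)
      have "k = Suc n0" using k Pn0 by (auto simp: P_def le_Suc_eq)
      moreover have "m + int (Suc n0) = j" by (simp add: j_def)
      ultimately show ?thesis using k by simp
    qed
    have Eb: "\<delta> + real n0 * (\<delta> * K) \<le> e/2"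
    proof -
      have "real n0 * (\<delta> * K) \<le> (4*A+2) * (\<delta> * K)" using Pbound[OF Pn0] dK0 by (intro mult_right_mono) auto
      also have "\<dots> \<le> (4*A+3) * (\<delta> * K)" using dK0 by (intro mult_right_mono) auto
      finally show ?thesis using de by (simp add: algebra_simps)
    qed
    have zzj: "xs j - \<delta> - real n0 * (\<delta> * K) \<le> zz j"
    proof -
      have i1: "\<bar>xs (m + int n0)\<bar> < 1" using xint0[OF Pn0 le_refl] .
      have "\<bar>p (m + int n0) - zz j\<bar> \<le> \<bar>artanh (xs (m + int n0)) - artanh (zz (m + int n0))\<bar>"
        unfolding p_def j_def zz_succ using flw_U_lip[OF i1 zz_int] .
      also have "\<dots> \<le> real n0 * (\<delta> * K)" using C2[OF Pn0] .
      finally show ?thesis using pclose[of "m + int n0"] j_def by (auto simp: abs_le_iff)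
    qed
    show ?thesis
    proof (intro exI[of _ x0] conjI allI impI)
      show "\<bar>x0\<bar> \<le> 1" using flw_bound xm_int x0_def by simp
      fix i t assume t: "Ssum ts i \<le> t \<and> t < Ssum ts (i+1)"
      have t': "S i \<le> t" "t < S i + ts i" using t Ssucc[of i] by (auto simp: Sdef)
      have yb: "-1 \<le> flw (t - S i) (xs i)" "flw (t - S i) (xs i) \<le> 1"
        using flw_bound'[of "xs i" "t - S i"] po1[of i] by (auto simp: abs_le_iff)
      have zb: "-1 \<le> flw t x0" "flw t x0 \<le> 1"
        using flw_bound'[of x0 t] flw_bound[of "xs m" "- S m"] po1[of m] x0_def by (auto simp: abs_le_iff)
      consider (a) "i < m" | (b) "i = m" | (c) "m < i" "i \<le> m + int n0" | (d) "m + int n0 < i" by linarith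
      then have "\<bar>flw t x0 - flw (t - S i) (xs i)\<bar> \<le> e"
      proof cases
        case a
        have xi1: "xs (i+1) < -\<theta>" using Ln[where i=m and j="i+1"] a xm by auto
        have "t - S i \<le> ts i" using t' by simp
        hence "flw (t - S i) (xs i) \<le> p i" using flw_tmono[OF po1[of i]] by (simp add: p_def)
        hence y: "flw (t - S i) (xs i) < -\<theta> + \<delta>" using pclose[of i] xi1 by linarith
        have "i + 1 \<le> m" using a by simp
        hence "S (i+1) \<le> S m" by (rule Smono)
        hence "t - S m \<le> 0" using t' Ssucc[of i] by simp
        hence "flw t x0 \<le> xs m" using z_t'[of t] flw_tmono[OF po1[of m], of "t - S m" 0] by simp
        then show ?thesis using y xm yb zb thdef d8 e by (auto simp: abs_le_iff)
      next
        case b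
        then show ?thesis using z_t' e by simp
      next
        case c
        define k where "k = nat (i - m)"
        have ki: "int k = i - m" using c k_def by simp
        have ik: "i = m + int k" "1 \<le> k" "k \<le> n0" using c ki by auto
        have Pk: "P k" using Pdown[OF Pn0 ik(3)] .
        have i1: "\<bar>xs i\<bar> < 1" using xint0[OF Pk le_refl] ik by simp
        have "\<bar>flw t x0 - flw (t - S i) (xs i)\<bar> = \<bar>flw (t - S i) (zz i) - flw (t - S i) (xs i)\<bar>" using z_t[of t i] by simp
        also have "\<dots> \<le> \<bar>artanh (zz i) - artanh (xs i)\<bar>" using flw_U_lip[OF zz_int i1] .
        also have "\<dots> \<le> real k * (\<delta> * K)" using C2[OF Pk] ik by (simp add: abs_minus_commute)
        also have "\<dots> \<le> real n0 * (\<delta> * K)" using ik dK0 by (intro mult_right_mono) auto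
        finally show ?thesis using Eb d0 by linarith
      next
        case d
        have ji: "j \<le> i" using d j_def by simp
        have xi: "\<theta> \<le> xs i" using Hn[OF ji xj] .
        have "0 \<le> t - S i" using t' by simp
        hence y: "xs i \<le> flw (t - S i) (xs i)" using flw_ge[OF po1[of i]] by simp
        have sj: "S j - S m \<le> t - S m" using Smono[OF ji] t' by simp
        have "zz j \<le> flw t x0" using flw_tmono[OF po1[of m] sj] z_t'[of t] unfolding zz_def by simp
        then show ?thesis using y xi zzj xj yb zb thdef Eb by (auto simp: abs_le_iff)
      qed
      then show "\<bar>flw t x0 - flw (t - Ssum ts i) (xs i)\<bar> \<le> e" by (simp add: Sdef)
    qed
  qed
qed


lemma id_Rep: "0 \<le> \<epsilon> \<Longrightarrow> (\<lambda>t::real. t) \<in> Rep \<epsilon>"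
  unfolding Rep_def inc_homeo_def using homeomorphism_ident[of UNIV]
  by (auto simp: strict_mono_def)

lemma shadow: "shadowing_property {-1..1::real} dist flw"
  unfolding shadowing_property_def
proof (intro allI impI)
  fix \<epsilon> :: real assume ep: "0 < \<epsilon>"
  define e where "e = min \<epsilon> 1"
  define h where "h = 1 - e/4"
  define \<theta> where "\<theta> = 1 - e/2"
  define K where "K = 1/(1-h^2)"
  define A where "A = artanh h"
  define D where "D = 1 + (4*A+3)*K"
  define \<delta> where "\<delta> = min (e / (2*D)) (tanh 1 * (1-h^2)/2)"
  have e: "0 < e" "e \<le> 1" "e \<le> \<epsilon>" using ep by (auto simp: e_def)
  have h1: "h < 1" "3/4 \<le> h" using e h_def by auto
  have hsq: "h^2 < 1"
  proof -
    have "\<bar>h\<bar> < 1" using h1 by auto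
    thus ?thesis by (simp add: abs_square_less_1)
  qed
  have hh: "0 < 1 - h^2" using hsq by simp
  have K0: "0 < K" using hh K_def by simp
  have A0: "0 \<le> A" using artanh_mono[of 0 h] h1 A_def by simp
  have "0 \<le> (4*A+3)*K" using A0 K0 by simp
  hence D0: "0 < D" using D_def by simp
  have t1: "0 < tanh (1::real)" by simp
  have d0: "0 < \<delta>" using e D0 hh t1 by (simp add: \<delta>_def)
  have dg: "\<delta> \<le> tanh 1 * (1-h^2)/2" by (simp add: \<delta>_def)
  have "\<delta> \<le> e / (2*D)" by (simp add: \<delta>_def)
  hence "\<delta> * D \<le> e / (2*D) * D" using D0 by (intro mult_right_mono) auto
  also have "\<dots> = e/2" using D0 by (simp add: field_simps)
  finally have de: "\<delta> * (1 + (4*A+3)*K) \<le> e/2" by (simp add: D_def)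
  show "\<exists>\<delta>>0. \<forall>xs ts. pseudo_orbit {-1..1} dist flw \<delta> 1 xs ts \<longrightarrow> shadowed {-1..1} dist flw \<epsilon> xs ts"
  proof (intro exI[of _ \<delta>] conjI allI impI)
    show "0 < \<delta>" by (rule d0)
    fix xs ts assume po: "pseudo_orbit {-1..1} dist flw \<delta> 1 xs ts"
    have po1: "\<And>i. \<bar>xs i\<bar> \<le> 1" and po2: "\<And>i. ts i \<ge> 1" and po3: "\<And>i. \<bar>flw (ts i) (xs i) - xs (i+1)\<bar> \<le> \<delta>"
    proof -
      have pa: "xs i \<in> {-1..1} \<and> 1 \<le> ts i \<and> dist (flw (ts i) (xs i)) (xs (i+1)) \<le> \<delta>" for i
        using po unfolding pseudo_orbit_def by blast
      show "\<bar>xs i\<bar> \<le> 1" for i using pa[of i] memX by blast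
      show "ts i \<ge> 1" for i using pa[of i] by blast
      show "\<bar>flw (ts i) (xs i) - xs (i+1)\<bar> \<le> \<delta>" for i using pa[of i] by (simp add: dist_real_def)
    qed
    obtain x0 where x0: "\<bar>x0\<bar> \<le> 1"
      "\<forall>i t. Ssum ts i \<le> t \<and> t < Ssum ts (i+1) \<longrightarrow> \<bar>flw t x0 - flw (t - Ssum ts i) (xs i)\<bar> \<le> e"
      using shadow_core[where xs=xs and ts=ts and e=e and h=h and \<theta>=\<theta> and K=K and A=A and \<delta>=\<delta>, OF e(1) e(2) h_def \<theta>_def K_def A_def d0 dg de po1 po2 po3] by blast
    show "shadowed {-1..1} dist flw \<epsilon> xs ts"
      unfolding shadowed_def
    proof (intro bexI[of _ x0] bexI[of _ "\<lambda>t. t"] allI impI)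
      show "x0 \<in> {-1..1}" using x0(1) memX by blast
      show "(\<lambda>t. t) \<in> Rep \<epsilon>" using ep by (intro id_Rep) simp
      fix i t assume "Ssum ts i \<le> t \<and> t < Ssum ts (i + 1)"
      then show "dist (flw t x0) (flw (t - Ssum ts i) (xs i)) \<le> \<epsilon>"
        using x0(2) e(3) by (force simp: dist_real_def)
    qed
  qed
qed

theorem mainTheorem10:
  shows "\<exists>(X :: real set) d \<phi>. Metric_space X d \<and>
           compact_space (Metric_space.mtopology X d) \<and>
           is_flow X d \<phi> \<and>
           shadowing_property X d \<phi> \<and>
           singular_expansive X d \<phi> \<and>
           singular_equicontinuous X d \<phi> \<and>
           \<not> equicontinuous_flow X d \<phi>"
  using ms cpt isflow shadow sing_exp sing_equi not_equi by blast


end
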